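(* Let $K\subset\mathbb{R}^k$ be a convex body symmetric about the origin and let $E(K)$ be the maximum volume ellipsoid contained in $K$. For a vector $\bm{u}$ on the boundary of $E(K)$, let $K'=\mathrm{conv}(K,2\sqrt{k}\bm{u},-2\sqrt{k}\bm{u})$. Then $\frac{\mathrm{vol}(E(K'))}{\mathrm{vol}(E(K))}\ge\frac{13}{10}$.
   Context: $\mathrm{conv}$ denotes convex hull, $\mathrm{vol}$ the $k$-dimensional volume, and $E(\cdot)$ the maximum-volume ellipsoid contained in a convex body. *)

theory Defs
  imports "HOL-Analysis.Analysis"
begin

definition convex_body :: "'a::euclidean_space set \<Rightarrow> bool" where
  "convex_body K \<longleftrightarrow> compact K \<and> convex K \<and> interior K \<noteq> {}"

definition origin_symmetric :: "'a::euclidean_space set \<Rightarrow> bool" where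
  "origin_symmetric K \<longleftrightarrow> (\<forall>x\<in>K. - x \<in> K)"

definition is_ellipsoid :: "'a::euclidean_space set \<Rightarrow> bool" where
  "is_ellipsoid E \<longleftrightarrow> (\<exists>c A. linear A \<and> inj A \<and> E = (\<lambda>x. c + A x) ` (cball 0 1 :: 'a set))"

definition vol :: "'a::euclidean_space set \<Rightarrow> real" where
  "vol S = measure lebesgue S"

definition max_vol_ellipsoid :: "'a::euclidean_space set \<Rightarrow> 'a set \<Rightarrow> bool" where
  "max_vol_ellipsoid K E \<longleftrightarrow> is_ellipsoid E \<and> E \<subseteq> K \<and>
     (\<forall>F. is_ellipsoid F \<and> F \<subseteq> K \<longrightarrow> vol F \<le> vol E)"

end

theory Submission
  imports Defs
begin


typedef (overloaded) ('a::euclidean_space) bidx = "Basis :: 'a set"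
  using nonempty_Basis by blast

instance bidx :: (euclidean_space) finite
proof
  have "finite (Rep_bidx ` (UNIV :: 'a bidx set))"
    by (metis type_definition.Rep_range[OF type_definition_bidx] finite_Basis)
  then show "finite (UNIV :: 'a bidx set)"
    using finite_imageD inj_on_def Rep_bidx_inject by (metis (mono_tags, lifting))
qed

definition bidx_nat :: "'a::euclidean_space bidx \<Rightarrow> nat" where
  "bidx_nat = (SOME f. inj f)"

lemma bidx_nat_inj: "inj (bidx_nat :: 'a::euclidean_space bidx \<Rightarrow> nat)"
proof -
  obtain f :: "'a bidx \<Rightarrow> nat" where "inj f"
    using finite_imp_inj_to_nat_seg[of "UNIV :: 'a bidx set"] by auto
  then show ?thesis unfolding bidx_nat_def by (metis someI_ex)
qed

instantiation bidx :: (euclidean_space) linorder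
begin
definition less_eq_bidx :: "'a bidx \<Rightarrow> 'a bidx \<Rightarrow> bool" where "less_eq_bidx x y \<longleftrightarrow> bidx_nat x \<le> bidx_nat y"
definition less_bidx :: "'a bidx \<Rightarrow> 'a bidx \<Rightarrow> bool" where "less_bidx x y \<longleftrightarrow> bidx_nat x < bidx_nat y"
instance
  by standard (auto simp: less_eq_bidx_def less_bidx_def dest: injD[OF bidx_nat_inj])
end

lemma wf_bidx: "wf {(x::'a::euclidean_space bidx, y). x < y}"
  by (rule wf_subset[OF wf_inv_image[OF wf_less, of bidx_nat]])
     (auto simp: less_bidx_def)

instance bidx :: (euclidean_space) wellorder
proof
  fix P :: "'a bidx \<Rightarrow> bool" and a :: "'a bidx"
  assume H: "\<And>x. (\<And>y. y < x \<Longrightarrow> P y) \<Longrightarrow> P x"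
  show "P a"
    by (induct a rule: wf_induct[OF wf_bidx]) (use H in blast)
qed


definition phi :: "'a::euclidean_space \<Rightarrow> real^('a bidx)" where
  "phi x = (\<chi> i. x \<bullet> Rep_bidx i)"

definition psi :: "real^('a::euclidean_space bidx) \<Rightarrow> 'a" where
  "psi v = (\<Sum>i\<in>UNIV. (v$i) *\<^sub>R Rep_bidx i)"

lemma Rep_bidx_Basis: "Rep_bidx i \<in> Basis"
  using Rep_bidx by blast

lemma range_Rep_bidx: "range (Rep_bidx :: 'a::euclidean_space bidx \<Rightarrow> 'a) = Basis"
  by (metis type_definition.Rep_range[OF type_definition_bidx])

lemma inj_Rep_bidx: "inj Rep_bidx"
  by (meson Rep_bidx_inject injI)

lemma sum_bidx: "(\<Sum>i\<in>UNIV. f (Rep_bidx i)) = (\<Sum>b\<in>(Basis::'a::euclidean_space set). f b)"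
proof -
  have "sum f (range Rep_bidx) = sum (f \<circ> Rep_bidx) UNIV" by (rule sum.reindex[OF inj_Rep_bidx])
  then show ?thesis by (simp add: range_Rep_bidx o_def)
qed

lemma prod_bidx: "(\<Prod>i\<in>UNIV. f (Rep_bidx i)) = (\<Prod>b\<in>(Basis::'a::euclidean_space set). f b)"
proof -
  have "prod f (range Rep_bidx) = prod (f \<circ> Rep_bidx) UNIV" by (rule prod.reindex[OF inj_Rep_bidx])
  then show ?thesis by (simp add: range_Rep_bidx o_def)
qed

lemma psi_inner: "psi v \<bullet> Rep_bidx j = v $ j"
proof -
  have "psi v \<bullet> Rep_bidx j = (\<Sum>i\<in>UNIV. v$i * (Rep_bidx i \<bullet> Rep_bidx j))"
    by (simp add: psi_def inner_sum_left)
  also have "\<dots> = (\<Sum>i\<in>UNIV. if i = j then v$i else 0)"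
    by (rule sum.cong) (auto simp: inner_Basis Rep_bidx_Basis Rep_bidx_inject)
  finally show ?thesis by simp
qed

lemma phi_psi [simp]: "phi (psi v) = v"
  by (simp add: phi_def psi_inner vec_eq_iff)

lemma psi_phi [simp]: "psi (phi x) = x"
proof -
  have "psi (phi x) = (\<Sum>i\<in>UNIV. (x \<bullet> Rep_bidx i) *\<^sub>R Rep_bidx i)"
    by (simp add: psi_def phi_def)
  also have "\<dots> = (\<Sum>b\<in>Basis. (x \<bullet> b) *\<^sub>R b)"
    by (rule sum_bidx)
  finally show ?thesis by (simp add: euclidean_representation)
qed

lemma linear_phi: "linear phi"
  by (rule linearI) (auto simp: phi_def vec_eq_iff inner_add_left)

lemma linear_psi: "linear psi"
  by (rule linearI) (auto simp: psi_def scaleR_add_left sum.distrib scaleR_sum_right)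

lemma bounded_linear_phi: "bounded_linear phi"
  using linear_phi linear_conv_bounded_linear by blast

lemma phi_measurable: "phi \<in> borel_measurable borel"
  by (intro borel_measurable_continuous_onI linear_continuous_on bounded_linear_phi)

lemma lborel_phi: "lborel = distr lborel borel (phi :: 'a::euclidean_space \<Rightarrow> _)"
proof (rule lborel_eqI)
  fix l u :: "real^('a bidx)"
  assume le: "\<And>b. b \<in> Basis \<Longrightarrow> l \<bullet> b \<le> u \<bullet> b"
  have pre: "phi -` box l u = box (psi l) (psi u)"
    by (auto simp: mem_box phi_def Basis_vec_def cart_eq_inner_axis[symmetric] psi_inner
        simp flip: range_Rep_bidx)
  have le': "\<forall>b\<in>(Basis::'a set). psi l \<bullet> b \<le> psi u \<bullet> b"
  proof
    fix b :: 'a assume "b \<in> Basis"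
    then obtain i where i: "b = Rep_bidx i" by (metis imageE range_Rep_bidx)
    have "l \<bullet> axis i 1 \<le> u \<bullet> axis i 1" using le by (auto simp: Basis_vec_def)
    then show "psi l \<bullet> b \<le> psi u \<bullet> b" by (simp add: i psi_inner inner_axis)
  qed
  have "emeasure (distr lborel borel phi) (box l u) = emeasure lborel (phi -` box l u)"
    by (simp add: emeasure_distr phi_measurable)
  also have "\<dots> = ennreal (\<Prod>b\<in>(Basis::'a set). (psi u - psi l) \<bullet> b)"
    using le' by (simp add: pre emeasure_lborel_box_eq)
  also have "(\<Prod>b\<in>(Basis::'a set). (psi u - psi l) \<bullet> b) = (\<Prod>i\<in>UNIV. (psi u - psi l) \<bullet> Rep_bidx i)"
    by (rule prod_bidx[symmetric])
  also have "\<dots> = (\<Prod>i\<in>UNIV. (u - l) \<bullet> axis i 1)"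
    by (simp add: inner_diff_left psi_inner inner_axis)
  also have "\<dots> = (\<Prod>b\<in>Basis. (u - l) \<bullet> b)"
  proof -
    have B: "(Basis :: (real^('a bidx)) set) = (\<lambda>i. axis i 1) ` UNIV"
      by (auto simp: Basis_vec_def)
    have inj: "inj (\<lambda>i::'a bidx. axis i (1::real))"
      by (auto simp: inj_on_def axis_eq_axis)
    show ?thesis
      unfolding B using prod.reindex[OF inj, of "\<lambda>b. (u - l) \<bullet> b"] by (simp add: o_def)
  qed
  finally show "emeasure (distr lborel borel phi) (box l u) = (\<Prod>b\<in>Basis. (u - l) \<bullet> b)" .
qed (rule sets_distr)

lemma measure_phi:
  assumes "compact (S :: 'a::euclidean_space set)"
  shows "measure lebesgue (phi ` S) = measure lebesgue S"
proof -
  have cS: "compact (phi ` S)"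
    using assms by (intro compact_continuous_image linear_continuous_on bounded_linear_phi)
  have b1: "phi ` S \<in> sets lborel" using cS by (simp add: borel_compact)
  have b2: "S \<in> sets lborel" using assms by (simp add: borel_compact)
  have "measure lebesgue (phi ` S) = measure lborel (phi ` S)"
    by (rule measure_completion[OF b1])
  also have "\<dots> = measure (distr lborel borel phi) (phi ` S)"
    by (simp only: lborel_phi[symmetric])
  also have "\<dots> = measure lborel (phi -` (phi ` S) \<inter> space lborel)"
  proof (rule measure_distr)
    show "phi \<in> measurable lborel borel" using phi_measurable by simp
    show "phi ` S \<in> sets borel" using b1 by simp
  qed
  also have "phi -` (phi ` S) \<inter> space lborel = S"
  proof -
    have "inj phi" by (rule injI) (metis psi_phi)
    then show ?thesis using inj_vimage_image_eq[of phi S] by simp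
  qed
  also have "measure lborel S = measure lebesgue S"
    by (rule measure_completion[OF b2, symmetric])
  finally show ?thesis .
qed



definition dt :: "('a::euclidean_space \<Rightarrow> 'a) \<Rightarrow> real" where
  "dt G = \<bar>det (matrix (phi \<circ> G \<circ> psi))\<bar>"

lemma linear_conj: "linear G \<Longrightarrow> linear (phi \<circ> G \<circ> psi)"
  by (intro linear_compose linear_phi linear_psi)

lemma vol_linear:
  fixes G :: "'a::euclidean_space \<Rightarrow> 'a"
  assumes "linear G" "compact S"
  shows "measure lebesgue (G ` S) = dt G * measure lebesgue S"
proof -
  have cG: "compact (G ` S)"
    using assms by (intro compact_continuous_image linear_continuous_on) (auto simp: linear_conv_bounded_linear)
  have cP: "compact (phi ` S)"
    using assms by (intro compact_continuous_image linear_continuous_on bounded_linear_phi)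
  have eq: "phi ` G ` S = (phi \<circ> G \<circ> psi) ` (phi ` S)"
    by (simp add: image_comp o_def)
  have "measure lebesgue (G ` S) = measure lebesgue (phi ` G ` S)"
    using measure_phi[OF cG] by simp
  also have "\<dots> = dt G * measure lebesgue (phi ` S)"
    unfolding eq dt_def by (rule measure_linear_image[OF linear_conj[OF assms(1)] lmeasurable_compact[OF cP]])
  also have "\<dots> = dt G * measure lebesgue S"
    using measure_phi[OF assms(2)] by simp
  finally show ?thesis .
qed

lemma dt_inj:
  fixes G :: "'a::euclidean_space \<Rightarrow> 'a"
  assumes "linear G"
  shows "dt G \<noteq> 0 \<longleftrightarrow> inj G"
proof -
  have "dt G \<noteq> 0 \<longleftrightarrow> inj (phi \<circ> G \<circ> psi)"
    unfolding dt_def using det_nz_iff_inj[OF linear_conj[OF assms]] by simp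
  also have "\<dots> \<longleftrightarrow> inj G"
  proof
    assume H: "inj (phi \<circ> G \<circ> psi)"
    show "inj G"
    proof (rule injI)
      fix x y assume "G x = G y"
      then have "(phi \<circ> G \<circ> psi) (phi x) = (phi \<circ> G \<circ> psi) (phi y)" by simp
      then have "phi x = phi y" using H unfolding inj_def by blast
      then show "x = y" by (metis psi_phi)
    qed
  next
    assume H: "inj G"
    show "inj (phi \<circ> G \<circ> psi)"
    proof (rule injI)
      fix x y assume "(phi \<circ> G \<circ> psi) x = (phi \<circ> G \<circ> psi) y"
      then have "psi (phi (G (psi x))) = psi (phi (G (psi y)))" by simp
      then have "G (psi x) = G (psi y)" by (simp only: psi_phi)
      then have "psi x = psi y" using H unfolding inj_def by blast
      then show "x = y" by (metis phi_psi)
    qed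
  qed
  finally show ?thesis .
qed

lemma dt_nonneg: "dt G \<ge> 0"
  by (simp add: dt_def)

abbreviation B1 :: "'a::euclidean_space set" where "B1 \<equiv> cball 0 1"

lemma vol_B1_pos: "measure lebesgue (B1 :: 'a::euclidean_space set) > 0"
  using content_cball_pos[of 1 "0::'a"] by simp

lemma dt_comp:
  fixes G H :: "'a::euclidean_space \<Rightarrow> 'a"
  assumes "linear G" "linear H"
  shows "dt (G \<circ> H) = dt G * dt H"
proof -
  have cH: "compact (H ` B1)"
    using assms by (intro compact_continuous_image linear_continuous_on) (auto simp: linear_conv_bounded_linear)
  have "dt (G \<circ> H) * measure lebesgue (B1::'a set) = measure lebesgue ((G \<circ> H) ` B1)"
    using vol_linear[of "G \<circ> H" B1] assms by (simp add: linear_compose)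
  also have "\<dots> = measure lebesgue (G ` H ` B1)" by (simp add: image_comp)
  also have "\<dots> = dt G * (dt H * measure lebesgue (B1::'a set))"
    using vol_linear[OF assms(1) cH] vol_linear[OF assms(2), of B1] by simp
  finally show ?thesis using vol_B1_pos[where 'a='a] by simp
qed

lemma phi_inner: "phi x \<bullet> phi y = x \<bullet> y"
proof -
  have "phi x \<bullet> phi y = (\<Sum>i\<in>UNIV. (x \<bullet> Rep_bidx i) * (y \<bullet> Rep_bidx i))"
    by (simp add: phi_def inner_vec_def)
  also have "\<dots> = (\<Sum>b\<in>Basis. (x \<bullet> b) * (y \<bullet> b))"
    by (rule sum_bidx)
  also have "\<dots> = x \<bullet> y"
    by (rule euclidean_inner[symmetric])
  finally show ?thesis .
qed

lemma psi_inner2: "psi v \<bullet> psi v' = v \<bullet> v'"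
  using phi_inner[of "psi v" "psi v'"] by simp

lemma phi_Rep: "phi (Rep_bidx k) = axis k 1"
  by (simp add: phi_def axis_def vec_eq_iff inner_Basis Rep_bidx_Basis Rep_bidx_inject)

definition stretch :: "'a::euclidean_space \<Rightarrow> real \<Rightarrow> real \<Rightarrow> 'a \<Rightarrow> 'a" where
  "stretch w a b x = (a * (x \<bullet> w)) *\<^sub>R w + b *\<^sub>R (x - (x \<bullet> w) *\<^sub>R w)"

lemma linear_stretch: "linear (stretch w a b)"
  by (rule linearI) (auto simp: stretch_def inner_add_left algebra_simps)


lemma vol_compact_content: "compact S \<Longrightarrow> measure lebesgue S = Henstock_Kurzweil_Integration.content S"
  by (rule measure_completion) (simp add: borel_compact)

lemma compact_linear_image: "linear (G :: 'a::euclidean_space \<Rightarrow> 'b::euclidean_space) \<Longrightarrow> compact S \<Longrightarrow> compact (G ` S)"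
  by (intro compact_continuous_image linear_continuous_on) (auto simp: linear_conv_bounded_linear)

lemma dt_diag:
  fixes e :: "'a::euclidean_space"
  assumes e: "e \<in> Basis"
  shows "dt (stretch e a b) = \<bar>a * b ^ (DIM('a) - 1)\<bar>"
proof -
  define m where "m k = (if k = e then a else b)" for k :: 'a
  have Deq: "stretch e a b = (\<lambda>x. \<Sum>k\<in>Basis. (m k * (x \<bullet> k)) *\<^sub>R k)"
  proof
    fix x :: 'a
    have "(\<Sum>k\<in>Basis. (m k * (x \<bullet> k)) *\<^sub>R k)
        = (\<Sum>k\<in>Basis. b *\<^sub>R ((x \<bullet> k) *\<^sub>R k) + (if k = e then ((a - b) * (x \<bullet> k)) *\<^sub>R k else 0))"
      by (rule sum.cong) (auto simp: m_def algebra_simps)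
    also have "\<dots> = b *\<^sub>R (\<Sum>k\<in>Basis. (x \<bullet> k) *\<^sub>R k) + ((a - b) * (x \<bullet> e)) *\<^sub>R e"
      using e by (simp add: sum.distrib scaleR_sum_right sum.delta)
    also have "\<dots> = b *\<^sub>R x + ((a - b) * (x \<bullet> e)) *\<^sub>R e"
      by (simp add: euclidean_representation)
    also have "\<dots> = stretch e a b x"
      by (simp add: stretch_def algebra_simps)
    finally show "stretch e a b x = (\<Sum>k\<in>Basis. (m k * (x \<bullet> k)) *\<^sub>R k)" by simp
  qed
  have prodm: "(\<Prod>k\<in>Basis. m k) = a * b ^ (DIM('a) - 1)"
  proof -
    have "(\<Prod>k\<in>Basis. m k) = m e * (\<Prod>k\<in>Basis - {e}. m k)"
      using e by (simp add: prod.remove)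
    also have "(\<Prod>k\<in>Basis - {e}. m k) = (\<Prod>k\<in>Basis - {e}. b)"
      by (rule prod.cong) (auto simp: m_def)
    also have "\<dots> = b ^ (DIM('a) - 1)"
      using e by (simp add: card_Diff_singleton)
    finally show ?thesis by (simp add: m_def)
  qed
  have cc: "compact (cbox 0 (One::'a))" by simp
  have "measure lebesgue (stretch e a b ` cbox 0 One) = dt (stretch e a b) * measure lebesgue (cbox 0 (One::'a))"
    by (rule vol_linear[OF linear_stretch cc])
  also have "measure lebesgue (cbox 0 (One::'a)) = 1"
    using vol_compact_content[OF cc] by simp
  also have "measure lebesgue (stretch e a b ` cbox 0 One) = Henstock_Kurzweil_Integration.content (stretch e a b ` cbox 0 (One::'a))"
    by (rule vol_compact_content[OF compact_linear_image[OF linear_stretch cc]])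
  also have "\<dots> = \<bar>\<Prod>k\<in>Basis. m k\<bar> * Henstock_Kurzweil_Integration.content (cbox 0 (One::'a))"
    unfolding Deq by (rule content_image_stretch_interval)
  finally show ?thesis using prodm by simp
qed

lemma norm_phi: "norm (phi x) = norm x"
  by (simp add: norm_eq_sqrt_inner phi_inner)

lemma norm_psi: "norm (psi v) = norm v"
  using norm_phi[of "psi v"] by simp

lemma dt_stretch:
  fixes w :: "'a::euclidean_space"
  assumes w: "norm w = 1"
  shows "dt (stretch w a b) = \<bar>a * b ^ (DIM('a) - 1)\<bar>"
proof -
  define k :: "'a bidx" where "k = undefined"
  define e where "e = Rep_bidx k"
  have e: "e \<in> Basis" unfolding e_def by (rule Rep_bidx_Basis)
  have nn: "norm (axis k (1::real)) = norm (phi w)"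
    using w by (simp add: norm_phi)
  have "\<exists>Q. orthogonal_transformation Q \<and> Q (axis k (1::real)) = phi w"
  proof (rule orthogonal_transformation_exists[OF nn])
    fix f assume f: "orthogonal_transformation f" "f (axis k (1::real)) = phi w"
    show "\<exists>Q. orthogonal_transformation Q \<and> Q (axis k (1::real)) = phi w"
      by (rule exI[of _ f]) (use f in simp)
  qed
  then obtain Q where Q: "orthogonal_transformation Q" "Q (axis k (1::real)) = phi w"
    by blast
  define R where "R = psi \<circ> Q \<circ> phi"
  have linR: "linear R"
    unfolding R_def using Q(1) by (intro linear_compose linear_phi linear_psi) (auto simp: orthogonal_transformation_def)
  have innR: "R x \<bullet> R y = x \<bullet> y" for x y
    using Q(1) by (simp add: R_def psi_inner2 orthogonal_transformation_def phi_inner)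
  have normR: "norm (R x) = norm x" for x
    by (simp add: norm_eq_sqrt_inner innR)
  have Re: "R e = w"
    by (simp add: R_def e_def phi_Rep Q(2))
  have injR: "inj R"
  proof (rule injI)
    fix x y assume "R x = R y"
    then have "R (x - y) = 0" by (simp add: linear_diff[OF linR])
    then have "norm (x - y) = 0" using normR[of "x - y"] by simp
    then show "x = y" by simp
  qed
  have surjR: "surj R"
    by (simp add: linear_injective_imp_surjective linR injR)
  have RB: "R ` B1 = B1"
  proof
    show "R ` B1 \<subseteq> B1" by (auto simp: normR)
    show "B1 \<subseteq> R ` B1"
    proof
      fix y :: 'a assume y: "y \<in> B1"
      from surjR obtain x where "y = R x" unfolding surj_def by blast
      then show "y \<in> R ` B1" using y by (auto simp: normR)
    qed
  qed
  have dtR: "dt R = 1"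
  proof -
    have "measure lebesgue (R ` B1) = dt R * measure lebesgue (B1::'a set)"
      by (rule vol_linear[OF linR]) simp
    then show ?thesis using RB vol_B1_pos[where 'a='a] by simp
  qed
  have comm: "stretch w a b \<circ> R = R \<circ> stretch e a b"
  proof
    fix x
    have "R x \<bullet> w = x \<bullet> e" using innR[of x e] Re by simp
    then show "(stretch w a b \<circ> R) x = (R \<circ> stretch e a b) x"
      by (simp add: stretch_def linear_add[OF linR] linear_scale[OF linR] linear_diff[OF linR] Re)
  qed
  have "dt (stretch w a b) = dt (stretch w a b \<circ> R)"
    using dt_comp[OF linear_stretch linR] dtR by simp
  also have "\<dots> = dt (stretch e a b)"
    using dt_comp[OF linR linear_stretch, of e a b] dtR comm by simp
  finally show ?thesis using dt_diag[OF e] by simp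
qed



lemma stretch_eq: "stretch w a b x = (a * (x \<bullet> w)) *\<^sub>R w + b *\<^sub>R (x - (x \<bullet> w) *\<^sub>R w)"
  by (simp add: stretch_def)

lemma stretch_neg: "stretch (-w) a b = stretch w a b"
  by (rule ext) (simp add: stretch_def)

lemma aux_frac: "(q::real) \<noteq> 0 \<Longrightarrow> D \<noteq> 0 \<Longrightarrow> L \<noteq> 0 \<Longrightarrow> (q\<^sup>2 / D) / ((L * q / D)\<^sup>2) = D / L\<^sup>2"
  by (simp add: field_simps power2_eq_square)

lemma cone_case:
  fixes w x :: "'a::euclidean_space"
  assumes w: "w \<bullet> w = 1" and x: "x \<bullet> x \<le> 1" and s: "2 * (x \<bullet> w) * L > 1"
    and L: "L \<ge> 2" and b: "b \<ge> 0" and bL: "b\<^sup>2 * (L\<^sup>2 - 1) = L\<^sup>2 - 4"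
  shows "stretch w 2 b x \<in> convex hull (B1 \<union> {L *\<^sub>R w, - (L *\<^sub>R w)})"
proof -
  define s where "s = x \<bullet> w"
  define y where "y = x - s *\<^sub>R w"
  have yw: "y \<bullet> w = 0" by (simp add: y_def s_def inner_diff_left w)
  have wy: "w \<bullet> y = 0" using yw by (simp add: inner_commute)
  have yy: "y \<bullet> y = x \<bullet> x - s\<^sup>2"
    by (simp add: y_def inner_diff_left inner_diff_right s_def inner_commute w power2_eq_square)
  have z: "stretch w 2 b x = (2 * s) *\<^sub>R w + b *\<^sub>R y"
    by (simp add: stretch_def s_def y_def)
  have s0: "s > 0" using s L unfolding s_def[symmetric]
    by (smt (verit) mult_nonneg_nonneg mult_nonpos_nonneg)
  have s1: "s \<le> 1"
  proof -
    have "s\<^sup>2 \<le> 1" using yy x inner_ge_zero[of y] by linarith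
    then show ?thesis using power2_le_imp_le[of s 1] by simp
  qed
  have L1: "L\<^sup>2 - 1 > 0" using L by (smt (verit) power2_le_imp_le one_le_power)
  have hin: "convex hull (B1 \<union> {L *\<^sub>R w, - (L *\<^sub>R w)}) \<supseteq> B1 \<union> {L *\<^sub>R w}"
    by (auto intro: hull_inc)
  define \<mu> where "\<mu> = L * (L - 2 * s) / (L\<^sup>2 - 1)"
  show ?thesis
  proof (cases "L = 2 * s")
    case True
    then have "s = 1" "L = 2" using s1 L by auto
    then have "y \<bullet> y \<le> 0" using yy x by simp
    then have "y = 0" using inner_ge_zero[of y] by simp
    then have "stretch w 2 b x = L *\<^sub>R w" using z \<open>s = 1\<close> \<open>L = 2\<close> by simp
    then show ?thesis using hin by auto
  next
    case False
    have mu0: "\<mu> > 0" unfolding \<mu>_def using False s1 L L1 by (intro divide_pos_pos mult_pos_pos) auto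
    have mu1: "\<mu> \<le> 1"
      unfolding \<mu>_def using L1 s s_def by (simp add: divide_le_eq_1 power2_eq_square algebra_simps)
    define p where "p = (1 / L) *\<^sub>R w + (b / \<mu>) *\<^sub>R y"
    have comb: "stretch w 2 b x = \<mu> *\<^sub>R p + (1 - \<mu>) *\<^sub>R (L *\<^sub>R w)"
    proof -
      have d: "L\<^sup>2 - 1 \<noteq> 0" using L1 by simp
      have L0: "L \<noteq> 0" using L by simp
      have e1: "\<mu> / L = (L - 2 * s) / (L\<^sup>2 - 1)"
        unfolding \<mu>_def using L0 by simp
      have e2: "(1 - \<mu>) * L = (L * (L\<^sup>2 - 1) - L\<^sup>2 * (L - 2 * s)) / (L\<^sup>2 - 1)"
        unfolding \<mu>_def using d by (simp add: field_simps power2_eq_square)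
      have e3: "(L - 2 * s) + (L * (L\<^sup>2 - 1) - L\<^sup>2 * (L - 2 * s)) = 2 * s * (L\<^sup>2 - 1)"
        by (simp add: algebra_simps power2_eq_square)
      have "\<mu> / L + (1 - \<mu>) * L = ((L - 2 * s) + (L * (L\<^sup>2 - 1) - L\<^sup>2 * (L - 2 * s))) / (L\<^sup>2 - 1)"
        unfolding e1 e2 by (simp add: add_divide_distrib)
      also have "\<dots> = 2 * s" unfolding e3 using d by simp
      finally have "\<mu> / L + (1 - \<mu>) * L = 2 * s" .
      then show ?thesis using mu0 unfolding z p_def
        by (simp add: algebra_simps flip: scaleR_add_left)
    qed
    have pp: "p \<bullet> p = 1 / L\<^sup>2 + (b / \<mu>)\<^sup>2 * (y \<bullet> y)"
      by (simp add: p_def inner_add_left inner_add_right w yw wy power2_eq_square)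
    have key: "b\<^sup>2 * (y \<bullet> y) * (L\<^sup>2 - 1) \<le> (L - 2 * s)\<^sup>2"
    proof -
      have "b\<^sup>2 * (y \<bullet> y) * (L\<^sup>2 - 1) = (b\<^sup>2 * (L\<^sup>2 - 1)) * (y \<bullet> y)" by (simp add: algebra_simps)
      also have "\<dots> = (L\<^sup>2 - 4) * (y \<bullet> y)" using bL by simp
      also have "\<dots> \<le> (L\<^sup>2 - 4) * (1 - s\<^sup>2)"
      proof (rule mult_left_mono)
        show "y \<bullet> y \<le> 1 - s\<^sup>2" using yy x by simp
        have "2 * 2 \<le> L * L" using L by (intro mult_mono) auto
        then show "0 \<le> L\<^sup>2 - 4" by (simp add: power2_eq_square)
      qed
      also have "\<dots> \<le> (L - 2 * s)\<^sup>2"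
        using sum_power2_ge_zero[of "L * s - 2" 0] by (simp add: power2_eq_square algebra_simps)
      finally show ?thesis .
    qed
    have "(b / \<mu>)\<^sup>2 * (y \<bullet> y) \<le> 1 - 1 / L\<^sup>2"
    proof -
      have "(b / \<mu>)\<^sup>2 * (y \<bullet> y) = b\<^sup>2 * (y \<bullet> y) / \<mu>\<^sup>2" by (simp add: power_divide)
      also have "\<dots> \<le> ((L - 2 * s)\<^sup>2 / (L\<^sup>2 - 1)) / \<mu>\<^sup>2"
        using key L1 mu0 by (intro divide_right_mono) (auto simp: pos_le_divide_eq)
      also have "\<dots> = (L\<^sup>2 - 1) / L\<^sup>2"
        unfolding \<mu>_def using L1 L False by (intro aux_frac) (auto simp del: diff_gt_0_iff_gt)
      also have "\<dots> = 1 - 1 / L\<^sup>2"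
        using L by (simp add: diff_divide_distrib)
      finally show ?thesis .
    qed
    then have "p \<bullet> p \<le> 1" using pp by simp
    then have pB: "p \<in> B1" by (simp add: norm_eq_sqrt_inner real_sqrt_le_1_iff)
    have "\<mu> *\<^sub>R p + (1 - \<mu>) *\<^sub>R (L *\<^sub>R w) \<in> convex hull (B1 \<union> {L *\<^sub>R w, - (L *\<^sub>R w)})"
      by (rule convexD[OF convex_convex_hull]) (use hin pB mu0 mu1 in auto)
    then show ?thesis using comb by simp
  qed
qed


lemma hull_lemma:
  fixes w x :: "'a::euclidean_space"
  assumes w: "norm w = 1" and x: "x \<in> B1"
    and L: "L \<ge> 2" and b: "b \<ge> 0" and bL: "b\<^sup>2 * (L\<^sup>2 - 1) = L\<^sup>2 - 4"
  shows "stretch w 2 b x \<in> convex hull (B1 \<union> {L *\<^sub>R w, - (L *\<^sub>R w)})"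
proof -
  have ww: "w \<bullet> w = 1" using w by (simp add: norm_eq_sqrt_inner)
  have xx: "x \<bullet> x \<le> 1" using x by (simp add: norm_eq_sqrt_inner)
  define s where "s = x \<bullet> w"
  consider "2 * s * L > 1" | "2 * s * L < -1" | "\<bar>2 * s * L\<bar> \<le> 1" by linarith
  then show ?thesis
  proof cases
    case 1
    then show ?thesis using cone_case[OF ww xx _ L b bL] by (simp add: s_def)
  next
    case 2
    have ww': "(-w) \<bullet> (-w) = 1" using ww by simp
    have "2 * (x \<bullet> -w) * L > 1" using 2 by (simp add: s_def)
    from cone_case[OF ww' xx this L b bL]
    show ?thesis by (simp add: stretch_neg insert_commute)
  next
    case 3
    define y where "y = x - s *\<^sub>R w"
    have yw: "y \<bullet> w = 0" by (simp add: y_def s_def inner_diff_left ww)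
    have wy: "w \<bullet> y = 0" using yw by (simp add: inner_commute)
    have yy: "y \<bullet> y = x \<bullet> x - s\<^sup>2"
      by (simp add: y_def inner_diff_left inner_diff_right s_def inner_commute ww power2_eq_square)
    have z: "stretch w 2 b x = (2 * s) *\<^sub>R w + b *\<^sub>R y"
      by (simp add: stretch_def s_def y_def)
    have zz: "stretch w 2 b x \<bullet> stretch w 2 b x = 4 * s\<^sup>2 + b\<^sup>2 * (y \<bullet> y)"
      unfolding z by (simp add: inner_add_left inner_add_right ww yw wy power2_eq_square)
    have L1: "L\<^sup>2 - 1 > 0" using L by (smt (verit) power2_le_imp_le one_le_power)
    have sL: "(2 * s * L)\<^sup>2 \<le> 1" using power_mono[OF 3 abs_ge_zero, of 2] by simp
    have "(4 * s\<^sup>2 + b\<^sup>2 * (y \<bullet> y)) * (L\<^sup>2 - 1) \<le> 1 * (L\<^sup>2 - 1)"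
    proof -
      have "(4 * s\<^sup>2 + b\<^sup>2 * (y \<bullet> y)) * (L\<^sup>2 - 1) = 4 * s\<^sup>2 * (L\<^sup>2 - 1) + (b\<^sup>2 * (L\<^sup>2 - 1)) * (y \<bullet> y)"
        by (simp add: algebra_simps)
      also have "\<dots> = 4 * s\<^sup>2 * (L\<^sup>2 - 1) + (L\<^sup>2 - 4) * (y \<bullet> y)" using bL by simp
      also have "\<dots> \<le> 4 * s\<^sup>2 * (L\<^sup>2 - 1) + (L\<^sup>2 - 4) * (1 - s\<^sup>2)"
      proof -
        have "2 * 2 \<le> L * L" using L by (intro mult_mono) auto
        then have "0 \<le> L\<^sup>2 - 4" by (simp add: power2_eq_square)
        moreover have "y \<bullet> y \<le> 1 - s\<^sup>2" using yy xx by simp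
        ultimately show ?thesis by (simp add: mult_left_mono)
      qed
      also have "\<dots> = 3 * (s\<^sup>2 * L\<^sup>2) + L\<^sup>2 - 4"
        by (simp add: algebra_simps)
      also have "\<dots> \<le> 1 * (L\<^sup>2 - 1)"
        using sL by (simp add: power_mult_distrib)
      finally show ?thesis .
    qed
    then have "4 * s\<^sup>2 + b\<^sup>2 * (y \<bullet> y) \<le> 1"
      using L1 by (rule mult_right_le_imp_le)
    then have "stretch w 2 b x \<in> B1"
      using zz by (simp add: norm_eq_sqrt_inner real_sqrt_le_1_iff)
    then show ?thesis by (auto intro: hull_inc)
  qed
qed


lemma exp_34: "exp (3/4 :: real) \<le> (16/13)^4"
proof -
  have "1 + (-3/16) \<le> exp (-3/16 :: real)" by (rule exp_ge_add_one_self)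
  then have "exp (3/16 :: real) \<le> 16/13"
    by (simp add: exp_minus field_simps)
  then have "exp (3/16 :: real) ^ 4 \<le> (16/13)^4"
    by (intro power_mono) auto
  moreover have "exp (3/16 :: real) ^ 4 = exp (3/4)"
    by (simp flip: exp_of_nat_mult)
  ultimately show ?thesis by simp
qed

lemma numeric:
  fixes n :: nat
  assumes "n \<ge> 1"
  shows "13/10 \<le> 2 * sqrt ((4 * real n - 4) / (4 * real n - 1)) ^ (n - 1)"
proof -
  define m where "m = n - 1"
  have n: "real n = real m + 1" using assms unfolding m_def by simp
  define q where "q = (4 * real m) / (4 * real m + 3)"
  have qe: "(4 * real n - 4) / (4 * real n - 1) = q" unfolding q_def n by (simp add: algebra_simps)
  have q0: "q \<ge> 0" unfolding q_def by simp
  have main: "q ^ m \<ge> 169/400"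
  proof (cases "m = 0")
    case True then show ?thesis by simp
  next
    case False
    then have m0: "real m > 0" by simp
    define t where "t = 3 / (4 * real m)"
    have t0: "t > 0" using m0 by (simp add: t_def)
    have qt: "q = 1 / (1 + t)"
      unfolding q_def t_def using m0 by (simp add: field_simps)
    have "(1 + t) ^ m \<le> exp t ^ m"
      using t0 by (intro power_mono) (auto intro: exp_ge_add_one_self[of t, simplified add.commute])
    also have "exp t ^ m = exp (real m * t)" by (simp flip: exp_of_nat_mult)
    also have "real m * t = 3/4" unfolding t_def using m0 by simp
    finally have "(1 + t) ^ m \<le> (16/13)^4" using exp_34 by linarith
    then have "1 / (16/13)^4 \<le> 1 / (1 + t) ^ m"
      using t0 by (intro divide_left_mono) auto
    also have "1 / (1 + t) ^ m = q ^ m" by (simp add: qt power_one_over)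
    finally have "1 / (16/13)^4 \<le> q ^ m" .
    moreover have "(169/400 :: real) \<le> 1 / (16/13)^4" by (simp add: power_divide divide_simps)
    ultimately show ?thesis by linarith
  qed
  have "sqrt q ^ (n - 1) = sqrt (q ^ m)" by (simp add: m_def real_sqrt_power)
  also have "sqrt (q ^ m) \<ge> sqrt (169/400)" using main by simp
  moreover have "sqrt (169/400 :: real) = 13/20"
    by (simp add: real_sqrt_divide)
  ultimately show ?thesis using qe by simp
qed



lemma vol_ellipsoid_lin:
  fixes A :: "'a::euclidean_space \<Rightarrow> 'a"
  assumes "linear A"
  shows "vol ((\<lambda>x. c + A x) ` B1) = dt A * measure lebesgue (B1::'a set)"
proof -
  have "(\<lambda>x. c + A x) ` B1 = (+) c ` (A ` B1)" by (simp add: image_image)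
  then have "vol ((\<lambda>x. c + A x) ` B1) = measure lebesgue (A ` B1)"
    by (simp add: vol_def measure_translation)
  also have "\<dots> = dt A * measure lebesgue (B1::'a set)"
    by (rule vol_linear[OF assms]) simp
  finally show ?thesis .
qed

lemma center:
  fixes K E :: "'a::euclidean_space set"
  assumes cvx: "convex K" and sym: "origin_symmetric K" and mx: "max_vol_ellipsoid K E"
  shows "\<exists>A :: 'a \<Rightarrow> 'a. linear A \<and> inj A \<and> E = A ` B1"
proof -
  have ellE: "is_ellipsoid E" and EK: "E \<subseteq> K"
    and maxF: "\<And>F. is_ellipsoid F \<Longrightarrow> F \<subseteq> K \<Longrightarrow> vol F \<le> vol E"
    using mx unfolding max_vol_ellipsoid_def by auto
  from ellE obtain c :: 'a and A :: "'a \<Rightarrow> 'a" where lin: "linear A" and inj: "inj A"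
    and Eeq: "E = (\<lambda>x. c + A x) ` B1"
    unfolding is_ellipsoid_def by blast
  have surj: "surj A" by (simp add: linear_injective_imp_surjective lin inj)
  then obtain c' where Ac0: "c = A c'" unfolding surj_def by blast
  then have Ac: "A c' = c" by simp
  have vB: "measure lebesgue (B1::'a set) > 0" by (rule vol_B1_pos)
  have volE: "vol E = dt A * measure lebesgue (B1::'a set)"
    unfolding Eeq by (rule vol_ellipsoid_lin[OF lin])
  have dtA: "dt A > 0" using dt_inj[OF lin] inj dt_nonneg[of A] by simp
  have c0: "c = 0"
  proof (rule ccontr)
    assume "c \<noteq> 0"
    then have "c' \<noteq> 0" using Ac linear_0[OF lin] by auto
    define d where "d = norm c'"
    have d0: "d > 0" using \<open>c' \<noteq> 0\<close> by (simp add: d_def)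
    define w where "w = (1 / d) *\<^sub>R c'"
    have w: "norm w = 1" using d0 by (simp add: w_def d_def)
    have dw: "d *\<^sub>R w = c'" using d0 by (simp add: w_def)
    define T where "T = stretch w (1 + d) 1"
    have Tx: "T x = x + (x \<bullet> w) *\<^sub>R c'" for x
    proof -
      have "T x = x + (x \<bullet> w) *\<^sub>R (d *\<^sub>R w)"
        by (simp add: T_def stretch_def algebra_simps)
      then show ?thesis using dw by simp
    qed
    define F where "F = (A \<circ> T) ` B1"
    have linT: "linear T" unfolding T_def by (rule linear_stretch)
    have linAT: "linear (A \<circ> T)" using lin linT by (rule linear_compose[rotated])
    have dtAT: "dt (A \<circ> T) = dt A * (1 + d)"
      using dt_comp[OF lin linT] dt_stretch[OF w, of "1 + d" 1] d0 by (simp add: T_def)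
    have injAT: "inj (A \<circ> T)" using dt_inj[OF linAT] dtAT dtA d0 by simp
    have ellF: "is_ellipsoid F"
      unfolding is_ellipsoid_def F_def
      by (rule exI[of _ 0], rule exI[of _ "A \<circ> T"]) (simp add: linAT injAT)
    have FK: "F \<subseteq> K"
    proof
      fix z assume "z \<in> F"
      then obtain x where x: "x \<in> B1" and z: "z = A (T x)" unfolding F_def by auto
      define s where "s = x \<bullet> w"
      have s1: "\<bar>s\<bar> \<le> 1"
      proof -
        have "\<bar>x \<bullet> w\<bar> \<le> norm x * norm w" by (rule Cauchy_Schwarz_ineq2)
        also have "\<dots> \<le> 1" using x w by simp
        finally show ?thesis unfolding s_def .
      qed
      have p: "c + A x \<in> K" using x EK Eeq by auto
      have "-x \<in> B1" using x by simp
      then have "c + A (-x) \<in> K" using EK Eeq by auto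
      then have q: "A x - c \<in> K" using sym unfolding origin_symmetric_def
        by (metis linear_neg[OF lin] minus_add_distrib minus_minus uminus_add_conv_diff add.commute)
      have "((1 + s) / 2) *\<^sub>R (c + A x) + ((1 - s) / 2) *\<^sub>R (A x - c) \<in> K"
        by (rule convexD[OF cvx p q]) (use s1 in \<open>auto simp: field_simps\<close>)
      moreover have "((1 + s) / 2) *\<^sub>R (c + A x) + ((1 - s) / 2) *\<^sub>R (A x - c) = A x + s *\<^sub>R c"
      proof -
        have e1: "(1+s)/2 + (1-s)/2 = 1" "(1+s)/2 - (1-s)/2 = s" by (simp_all add: field_simps)
        have "((1 + s) / 2) *\<^sub>R (c + A x) + ((1 - s) / 2) *\<^sub>R (A x - c)
            = ((1+s)/2 + (1-s)/2) *\<^sub>R A x + ((1+s)/2 - (1-s)/2) *\<^sub>R c"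
          by (simp add: algebra_simps scaleR_add_left scaleR_diff_left)
        then show ?thesis unfolding e1 by simp
      qed
      moreover have "z = A x + s *\<^sub>R c"
        unfolding z Tx s_def using Ac by (simp add: linear_add[OF lin] linear_scale[OF lin])
      ultimately show "z \<in> K" by simp
    qed
    have "vol F = dt A * (1 + d) * measure lebesgue (B1::'a set)"
      unfolding F_def vol_def using vol_linear[OF linAT, of B1] dtAT by simp
    moreover have "vol F \<le> vol E" by (rule maxF[OF ellF FK])
    ultimately have "dt A * (1 + d) * measure lebesgue (B1::'a set) \<le> dt A * measure lebesgue (B1::'a set)"
      using volE by simp
    then have "(dt A * measure lebesgue (B1::'a set)) * d \<le> 0" by (simp add: algebra_simps)
    moreover have "(dt A * measure lebesgue (B1::'a set)) * d > 0" using dtA vB d0 by simp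
    ultimately show False by linarith
  qed
  have "E = A ` B1" using Eeq c0 by simp
  then show ?thesis using lin inj by blast
qed


theorem lemma4:
  fixes K E E' :: "'a::euclidean_space set" and u :: 'a
  assumes "convex_body K" and "origin_symmetric K"
    and "max_vol_ellipsoid K E"
    and "u \<in> frontier E"
    and "max_vol_ellipsoid
           (convex hull (K \<union> {(2 * sqrt (real DIM('a))) *\<^sub>R u, - ((2 * sqrt (real DIM('a))) *\<^sub>R u)})) E'"
  shows "vol E' / vol E \<ge> 13 / 10"
proof -
  define n where "n = DIM('a)"
  define L where "L = 2 * sqrt (real n)"
  define K' where "K' = convex hull (K \<union> {L *\<^sub>R u, - (L *\<^sub>R u)})"
  have n1: "n \<ge> 1" unfolding n_def using DIM_positive[where 'a='a] by linarith
  have cvx: "convex K" using assms(1) unfolding convex_body_def by blast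
  obtain A :: "'a \<Rightarrow> 'a" where lin: "linear A" and inj: "inj A" and EA: "E = A ` B1"
    using center[OF cvx assms(2) assms(3)] by blast
  have EK: "E \<subseteq> K" using assms(3) unfolding max_vol_ellipsoid_def by blast
  have maxE': "\<And>F. is_ellipsoid F \<Longrightarrow> F \<subseteq> K' \<Longrightarrow> vol F \<le> vol E'"
    using assms(5) unfolding max_vol_ellipsoid_def K'_def L_def n_def by blast
  have surj: "surj A" by (simp add: linear_injective_imp_surjective lin inj)
  obtain w where w: "norm w = 1" and uw: "u = A w"
  proof -
    have cE: "compact E" unfolding EA by (rule compact_linear_image[OF lin]) simp
    then have "closure E = E" by (simp add: compact_imp_closed closure_closed)
    then have uE: "u \<in> E" and uint: "u \<notin> interior E"
      using assms(4) by (auto simp: frontier_def)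
    then obtain w0 where w0: "w0 \<in> B1" and uw0: "u = A w0" unfolding EA by blast
    have "norm w0 = 1"
    proof (rule ccontr)
      assume "norm w0 \<noteq> 1"
      then have "w0 \<in> ball 0 1" using w0 by simp
      moreover have "open (A ` ball 0 1)"
        by (rule open_surjective_linear_image[OF open_ball lin surj])
      moreover have "A ` ball 0 1 \<subseteq> E" unfolding EA by auto
      ultimately have "u \<in> interior E" using uw0 by (meson imageI interiorI)
      then show False using uint by simp
    qed
    then show ?thesis using that uw0 by blast
  qed
  define b where "b = sqrt ((4 * real n - 4) / (4 * real n - 1))"
  have b0: "b \<ge> 0" unfolding b_def using n1 by simp
  have L2: "L\<^sup>2 = 4 * real n" unfolding L_def by (simp add: power_mult_distrib)
  have bL: "b\<^sup>2 * (L\<^sup>2 - 1) = L\<^sup>2 - 4"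
  proof -
    have "b\<^sup>2 = (4 * real n - 4) / (4 * real n - 1)" unfolding b_def using n1 by simp
    moreover have "4 * real n - 1 \<noteq> 0" using n1 by simp
    ultimately show ?thesis unfolding L2 by simp
  qed
  have L: "L \<ge> 2" unfolding L_def using n1 by simp
  define T where "T = stretch w 2 b"
  have linT: "linear T" unfolding T_def by (rule linear_stretch)
  have linAT: "linear (A \<circ> T)" using lin linT by (rule linear_compose[rotated])
  have ratio: "13/10 \<le> 2 * b ^ (n - 1)" unfolding b_def by (rule numeric[OF n1])
  have dtAT: "dt (A \<circ> T) = dt A * (2 * b ^ (n - 1))"
    using dt_comp[OF lin linT] dt_stretch[OF w, of 2 b] ratio by (simp add: T_def n_def)
  have dtA: "dt A > 0" using dt_inj[OF lin] inj dt_nonneg[of A] by simp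
  have "dt (A \<circ> T) \<noteq> 0"
  proof -
    have "2 * b ^ (n - 1) > 0" using ratio by linarith
    then have "dt A * (2 * b ^ (n - 1)) > 0" using dtA by (rule mult_pos_pos[rotated])
    then show ?thesis unfolding dtAT by linarith
  qed
  then have injAT: "inj (A \<circ> T)" using dt_inj[OF linAT] by blast
  define F where "F = (A \<circ> T) ` B1"
  have ellF: "is_ellipsoid F"
    unfolding is_ellipsoid_def F_def
    by (rule exI[of _ 0], rule exI[of _ "A \<circ> T"]) (simp add: linAT injAT)
  have FK: "F \<subseteq> K'"
  proof
    fix z assume "z \<in> F"
    then obtain x where x: "x \<in> B1" and z: "z = A (T x)" unfolding F_def by auto
    have "T x \<in> convex hull (B1 \<union> {L *\<^sub>R w, - (L *\<^sub>R w)})"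
      unfolding T_def by (rule hull_lemma[OF w x L b0 bL])
    then have "z \<in> A ` (convex hull (B1 \<union> {L *\<^sub>R w, - (L *\<^sub>R w)}))" using z by blast
    also have "\<dots> = convex hull (A ` (B1 \<union> {L *\<^sub>R w, - (L *\<^sub>R w)}))"
      by (rule convex_hull_linear_image[OF lin])
    also have "\<dots> \<subseteq> K'"
      unfolding K'_def
    proof (rule hull_mono)
      show "A ` (B1 \<union> {L *\<^sub>R w, - (L *\<^sub>R w)}) \<subseteq> K \<union> {L *\<^sub>R u, - (L *\<^sub>R u)}"
        using EK EA uw by (auto simp: linear_scale[OF lin] linear_neg[OF lin])
    qed
    finally show "z \<in> K'" .
  qed
  have vF: "vol F = dt A * (2 * b ^ (n - 1)) * measure lebesgue (B1::'a set)"
    unfolding F_def vol_def using vol_linear[OF linAT, of B1] dtAT by simp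
  have vE: "vol E = dt A * measure lebesgue (B1::'a set)"
    unfolding EA vol_def by (rule vol_linear[OF lin]) simp
  have vEpos: "vol E > 0" using vE dtA vol_B1_pos[where 'a='a] by simp
  have "vol F \<le> vol E'" by (rule maxE'[OF ellF FK])
  then have "(2 * b ^ (n - 1)) * vol E \<le> vol E'" using vF vE by (simp add: algebra_simps)
  then have "2 * b ^ (n - 1) \<le> vol E' / vol E" using vEpos by (simp add: pos_le_divide_eq)
  then show ?thesis using ratio by linarith
qed


end
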